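(* Let $m\ge 1$, let $\lambda_1\ge 0$ and $\lambda_2\ge 0$, and let $f_1\ge f_2\ge\cdots\ge f_m$ be real numbers. Then there exist real numbers $\tau_{i0}\in[-\lambda_1,\lambda_1]$ for $i=1,\dots,m$ and real numbers $\tau_{ij}\in[-\lambda_2,\lambda_2]$ for $i\neq j\in\{1,\dots,m\}$, satisfying $\tau_{ij}=-\tau_{ji}$ for all $i\ne j$, such that $$f_i+\tau_{i0}+\sum_{j\in\{1,\dots,m\}\setminus\{i\}}\tau_{ij}=0,\qquad i=1,\dots,m,$$ if and only if $$\sum_{j=1}^{k}f_j\le \lambda_1 k+\lambda_2 k(m-k)\quad\text{for } k=1,\dots,m,$$ and $$\sum_{j=k+1}^{m}f_j\ge -\lambda_1(m-k)-\lambda_2 k(m-k)\quad\text{for } k=0,\dots,m-1.$$ *)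

theory Defs
  imports Complex_Main
begin

end

theory Submission
  imports Defs
begin

lemma sum_split:
  fixes f :: "nat \<Rightarrow> real"
  assumes "k \<le> m" shows "sum f {1..m} = sum f {1..k} + sum f {k+1..m}"
  using sum.ub_add_nat[of 1 k f "m-k"] assms by simp

lemma antisym_sum0:
  fixes t :: "nat \<Rightarrow> nat \<Rightarrow> real"
  assumes "finite A" "\<forall>i\<in>A. \<forall>j\<in>A. i \<noteq> j \<longrightarrow> t i j = - t j i"
  shows "(\<Sum>i\<in>A. \<Sum>j\<in>A - {i}. t i j) = 0"
proof -
  define h where "h i j = (if i = j then 0 else t i j)" for i j
  have 1: "(\<Sum>i\<in>A. \<Sum>j\<in>A - {i}. t i j) = (\<Sum>i\<in>A. \<Sum>j\<in>A. h i j)"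
  proof (rule sum.cong)
    fix i assume i: "i \<in> A"
    have "(\<Sum>j\<in>A. h i j) = h i i + (\<Sum>j\<in>A - {i}. h i j)"
      using sum.remove[OF assms(1) i] by simp
    also have "\<dots> = (\<Sum>j\<in>A - {i}. t i j)" by (simp add: h_def)
    finally show "(\<Sum>j\<in>A - {i}. t i j) = (\<Sum>j\<in>A. h i j)" by simp
  qed simp
  have 2: "(\<Sum>i\<in>A. \<Sum>j\<in>A. h i j) = (\<Sum>j\<in>A. \<Sum>i\<in>A. h i j)" by (rule sum.swap)
  have 3: "(\<Sum>j\<in>A. \<Sum>i\<in>A. h i j) = (\<Sum>j\<in>A. \<Sum>i\<in>A. - h j i)"
  proof (intro sum.cong refl)
    fix i j assume ij: "j \<in> A" "i \<in> A"
    show "h i j = - h j i"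
    proof (cases "i = j")
      case False
      then have "t i j = - t j i" using assms(2) ij by blast
      then show ?thesis using False by (simp add: h_def)
    qed (simp add: h_def)
  qed
  have 4: "(\<Sum>j\<in>A. \<Sum>i\<in>A. - h j i) = - (\<Sum>i\<in>A. \<Sum>j\<in>A. h i j)"
    by (simp add: sum_negf)
  show ?thesis using 1 2 3 4 by linarith
qed

lemma split_pt:
  fixes P :: "nat \<Rightarrow> bool"
  assumes "\<And>i j. 1 \<le> i \<Longrightarrow> i \<le> j \<Longrightarrow> j \<le> n \<Longrightarrow> P j \<Longrightarrow> P i"
  shows "\<exists>p\<le>n. (\<forall>i. 1 \<le> i \<and> i \<le> p \<longrightarrow> P i) \<and> (\<forall>i. p < i \<and> i \<le> n \<longrightarrow> \<not> P i)"
proof -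
  define S where "S = {i \<in> {0..n}. \<forall>j. 1 \<le> j \<and> j \<le> i \<longrightarrow> P j}"
  have fin: "finite S" and ne: "S \<noteq> {}" unfolding S_def by auto
  define p where "p = Max S"
  have pS: "p \<in> S" unfolding p_def using Max_in[OF fin ne] .
  show ?thesis
  proof (intro exI conjI allI impI)
    show "p \<le> n" using pS unfolding S_def by auto
    fix i assume "1 \<le> i \<and> i \<le> p" then show "P i" using pS unfolding S_def by auto
  next
    fix i assume i: "p < i \<and> i \<le> n"
    show "\<not> P i"
    proof
      assume "P i"
      then have "i \<in> S" unfolding S_def using i assms by auto
      then have "i \<le> p" unfolding p_def using Max_ge[OF fin] by auto
      then show False using i by simp
    qed
  qed
qed

lemma concave_arith:
  fixes P K Q M l G Gp Gq th :: real
  assumes "P < K" "K < Q" "0 \<le> l"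
    "Gp \<le> l * P * (M - P)" "Gq \<le> l * Q * (M - Q)"
    "G = Gp + (K - P) * th" "Gq = G + (Q - K) * th"
  shows "G \<le> l * K * (M - K)"
proof -
  have e: "(Q - P) * G = (Q - K) * Gp + (K - P) * Gq"
  proof -
    have a: "Gp = G - (K - P) * th" "Gq = G + (Q - K) * th" using assms(6,7) by simp_all
    show ?thesis unfolding a by (simp add: algebra_simps)
  qed
  have "(Q - K) * Gp + (K - P) * Gq \<le> (Q - K) * (l * P * (M - P)) + (K - P) * (l * Q * (M - Q))"
    using assms by (intro add_mono mult_left_mono) auto
  also have "\<dots> = (Q - P) * (l * K * (M - K)) - l * ((K - P) * (Q - K) * (Q - P))"
    by (simp add: algebra_simps)
  also have "\<dots> \<le> (Q - P) * (l * K * (M - K))"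
    using assms by (simp add: mult_nonneg_nonneg)
  finally have "(Q - P) * G \<le> (Q - P) * (l * K * (M - K))" using e by simp
  then show ?thesis using assms(1,2) by (simp add: mult_le_cancel_left)
qed

lemma landau_arith:
  fixes a k G gm l :: real
  assumes "1 \<le> a" "a * gm \<le> - G" "G \<le> l * k * a" "0 \<le> l" "0 \<le> k"
  shows "G + gm \<le> l * (k + 1) * (a - 1)"
proof (cases "G \<ge> 0")
  case True
  have "a * (G + gm) \<le> (a - 1) * G" using assms by (simp add: algebra_simps)
  also have "\<dots> \<le> (a - 1) * (l * k * a)" using assms by (intro mult_left_mono) auto
  finally have "a * (G + gm) \<le> a * (l * k * (a - 1))" by (simp add: algebra_simps)
  then have "G + gm \<le> l * k * (a - 1)" using assms(1) by simp
  also have "\<dots> \<le> l * (k + 1) * (a - 1)" using assms by (intro mult_right_mono mult_left_mono) auto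
  finally show ?thesis .
next
  case False
  have "a * (G + gm) \<le> (a - 1) * G" using assms by (simp add: algebra_simps)
  also have "\<dots> \<le> 0" using False assms by (simp add: mult_nonneg_nonpos)
  finally have "G + gm \<le> 0" using assms(1) by (simp add: mult_le_0_iff)
  also have "0 \<le> l * (k + 1) * (a - 1)" using assms by simp
  finally show ?thesis .
qed


lemma necessity:
  fixes f t0 :: "nat \<Rightarrow> real" and t :: "nat \<Rightarrow> nat \<Rightarrow> real"
  assumes b0: "\<forall>i\<in>{1..m}. t0 i \<in> {-lam1..lam1}"
    and bt: "\<forall>i\<in>{1..m}. \<forall>j\<in>{1..m}. i \<noteq> j \<longrightarrow> t i j \<in> {-lam2..lam2} \<and> t i j = - t j i"
    and eq: "\<forall>i\<in>{1..m}. f i + t0 i + (\<Sum>j\<in>{1..m} - {i}. t i j) = 0"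
    and X: "X \<subseteq> {1..m}"
  shows "\<bar>\<Sum>i\<in>X. f i\<bar> \<le> real (card X) * lam1 + real (card X) * real (card ({1..m} - X)) * lam2"
proof -
  define Y where "Y = {1..m} - X"
  have finX: "finite X" using X finite_subset by blast
  have finY: "finite Y" unfolding Y_def by simp
  have row: "(\<Sum>j\<in>{1..m} - {i}. t i j) = (\<Sum>j\<in>X - {i}. t i j) + (\<Sum>j\<in>Y. t i j)" if i: "i \<in> X" for i
  proof -
    have "{1..m} - {i} = (X - {i}) \<union> Y" using X i unfolding Y_def by auto
    moreover have "(X - {i}) \<inter> Y = {}" unfolding Y_def by auto
    ultimately show ?thesis using finX finY by (simp add: sum.union_disjoint)
  qed
  have "0 = (\<Sum>i\<in>X. f i + t0 i + (\<Sum>j\<in>{1..m} - {i}. t i j))"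
    using eq X by (intro sum.neutral[symmetric]) auto
  also have "\<dots> = (\<Sum>i\<in>X. f i + t0 i + ((\<Sum>j\<in>X - {i}. t i j) + (\<Sum>j\<in>Y. t i j)))"
    using row by (intro sum.cong) auto
  also have "\<dots> = (\<Sum>i\<in>X. f i) + (\<Sum>i\<in>X. t0 i) + (\<Sum>i\<in>X. \<Sum>j\<in>X - {i}. t i j) + (\<Sum>i\<in>X. \<Sum>j\<in>Y. t i j)"
    by (simp add: sum.distrib)
  also have "(\<Sum>i\<in>X. \<Sum>j\<in>X - {i}. t i j) = 0"
  proof (rule antisym_sum0[OF finX])
    show "\<forall>i\<in>X. \<forall>j\<in>X. i \<noteq> j \<longrightarrow> t i j = - t j i" using X bt by blast
  qed
  finally have e: "(\<Sum>i\<in>X. f i) = - (\<Sum>i\<in>X. t0 i) - (\<Sum>i\<in>X. \<Sum>j\<in>Y. t i j)" by simp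
  have a1: "\<bar>\<Sum>i\<in>X. t0 i\<bar> \<le> real (card X) * lam1"
  proof -
    have "\<bar>\<Sum>i\<in>X. t0 i\<bar> \<le> (\<Sum>i\<in>X. \<bar>t0 i\<bar>)" by (rule sum_abs)
    also have "\<dots> \<le> real (card X) * lam1"
    proof (intro sum_bounded_above)
      fix i assume "i \<in> X"
      then have "t0 i \<in> {-lam1..lam1}" using b0 X by auto
      then show "\<bar>t0 i\<bar> \<le> lam1" by (simp add: abs_le_iff)
    qed
    finally show ?thesis .
  qed
  have a2: "\<bar>\<Sum>i\<in>X. \<Sum>j\<in>Y. t i j\<bar> \<le> real (card X) * (real (card Y) * lam2)"
  proof -
    have "\<bar>\<Sum>i\<in>X. \<Sum>j\<in>Y. t i j\<bar> \<le> (\<Sum>i\<in>X. \<bar>\<Sum>j\<in>Y. t i j\<bar>)" by (rule sum_abs)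
    also have "\<dots> \<le> real (card X) * (real (card Y) * lam2)"
    proof (intro sum_bounded_above)
      fix i assume i: "i \<in> X"
      have "\<bar>\<Sum>j\<in>Y. t i j\<bar> \<le> (\<Sum>j\<in>Y. \<bar>t i j\<bar>)" by (rule sum_abs)
      also have "\<dots> \<le> real (card Y) * lam2"
      proof (intro sum_bounded_above)
        fix j assume j: "j \<in> Y"
        then have "i \<noteq> j" "i \<in> {1..m}" "j \<in> {1..m}" using i X unfolding Y_def by auto
        then have "t i j \<in> {-lam2..lam2}" using bt by blast
        then show "\<bar>t i j\<bar> \<le> lam2" by (simp add: abs_le_iff)
      qed
      finally show "\<bar>\<Sum>j\<in>Y. t i j\<bar> \<le> real (card Y) * lam2" .
    qed
    finally show ?thesis .
  qed
  show ?thesis using e a1 a2 unfolding Y_def[symmetric] by (simp add: algebra_simps)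
qed


lemma lemB:
  fixes f :: "nat \<Rightarrow> real"
  assumes l1: "lam1 \<ge> 0" and l2: "lam2 \<ge> 0" and m1: "m \<ge> 1"
    and srt: "\<And>i j. 1 \<le> i \<Longrightarrow> i \<le> j \<Longrightarrow> j \<le> m \<Longrightarrow> f j \<le> f i"
    and pre: "\<forall>k\<in>{1..m}. (\<Sum>j=1..k. f j) \<le> lam1 * real k + lam2 * real k * real (m - k)"
    and suf: "\<forall>k\<in>{0..m-1}. (\<Sum>j=k+1..m. f j) \<ge> - lam1 * real (m - k) - lam2 * real k * real (m - k)"
  shows "\<exists>g. (\<forall>i\<in>{1..m}. \<bar>g i - f i\<bar> \<le> lam1) \<and> (\<forall>i j. 1 \<le> i \<longrightarrow> i \<le> j \<longrightarrow> j \<le> m \<longrightarrow> g j \<le> g i)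
     \<and> sum g {1..m} = 0 \<and> (\<forall>k\<le>m. sum g {1..k} \<le> lam2 * real k * (real m - real k))"
proof -
  define c where "c th i = max (f i - lam1) (min th (f i + lam1))" for th i
  define \<phi> where "\<phi> th = (\<Sum>i\<in>{1..m}. c th i)" for th
  have cont: "continuous_on {f m - lam1 .. f 1 + lam1} \<phi>"
    unfolding \<phi>_def c_def by (intro continuous_intros)
  have lo: "\<phi> (f m - lam1) \<le> 0"
  proof -
    have "\<phi> (f m - lam1) = (\<Sum>i\<in>{1..m}. f i - lam1)"
      unfolding \<phi>_def
    proof (intro sum.cong refl)
      fix i assume "i \<in> {1..m}"
      then have "f m \<le> f i" using srt by auto
      then show "c (f m - lam1) i = f i - lam1" unfolding c_def using l1 by simp
    qed
    also have "\<dots> = (\<Sum>i=1..m. f i) - real m * lam1" by (simp add: sum_subtractf)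
    also have "\<dots> \<le> 0"
    proof -
      have mm: "m \<in> {1..m}" using m1 by simp
      have "(\<Sum>i=1..m. f i) \<le> lam1 * real m + lam2 * real m * real (m - m)" using pre mm by blast
      then show ?thesis by (simp add: algebra_simps)
    qed
    finally show ?thesis .
  qed
  have hi: "0 \<le> \<phi> (f 1 + lam1)"
  proof -
    have "\<phi> (f 1 + lam1) = (\<Sum>i\<in>{1..m}. f i + lam1)"
      unfolding \<phi>_def
    proof (intro sum.cong refl)
      fix i assume "i \<in> {1..m}"
      then have "f i \<le> f 1" using srt by auto
      then show "c (f 1 + lam1) i = f i + lam1" unfolding c_def using l1 by simp
    qed
    also have "\<dots> = (\<Sum>i=1..m. f i) + real m * lam1" by (simp add: sum.distrib)
    moreover have "0 \<in> {0..m-1}" by simp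
    then have "- lam1 * real (m - 0) - lam2 * real 0 * real (m - 0) \<le> (\<Sum>j=0+1..m. f j)" using suf by blast
    ultimately show ?thesis by (simp add: algebra_simps)
  qed
  have le: "f m - lam1 \<le> f 1 + lam1" using srt[of 1 m] m1 l1 by simp
  obtain th where th: "\<phi> th = 0" using IVT'[OF lo hi le cont] by blast
  define g where "g = c th"
  have gab: "\<forall>i\<in>{1..m}. \<bar>g i - f i\<bar> \<le> lam1"
    using l1 unfolding g_def c_def by (auto simp: abs_le_iff max_def min_def)
  have gs: "\<forall>i j. 1 \<le> i \<longrightarrow> i \<le> j \<longrightarrow> j \<le> m \<longrightarrow> g j \<le> g i"
  proof (intro allI impI)
    fix i j :: nat assume "1 \<le> i" "i \<le> j" "j \<le> m"
    then have "f j \<le> f i" using srt by blast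
    then show "g j \<le> g i" unfolding g_def c_def by (intro max.mono min.mono) auto
  qed
  have g0: "sum g {1..m} = 0" using th unfolding g_def \<phi>_def by simp
  define top where "top i = (th \<le> f i - lam1)" for i
  define nb where "nb i = (th < f i + lam1)" for i
  have gtop: "g i = f i - lam1" if "top i" for i
    using that l1 unfolding top_def g_def c_def by simp
  have gbot: "g i = f i + lam1" if "\<not> nb i" for i
    using that l1 unfolding nb_def g_def c_def by simp
  have gmid: "g i = th" if "\<not> top i" "nb i" for i
    using that unfolding top_def nb_def g_def c_def by simp
  have factA: "sum g {1..k} \<le> lam2 * real k * (real m - real k)"
    if k: "k \<le> m" "\<forall>i. 1 \<le> i \<and> i \<le> k \<longrightarrow> top i" for k
  proof (cases "k = 0")
    case True then show ?thesis by simp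
  next
    case False
    have "sum g {1..k} = (\<Sum>i=1..k. f i - lam1)" using k gtop by (intro sum.cong) auto
    also have "\<dots> = (\<Sum>i=1..k. f i) - real k * lam1" by (simp add: sum_subtractf)
    also have "\<dots> \<le> lam2 * real k * real (m - k)" using pre k False by (auto simp: algebra_simps)
    finally show ?thesis using k by (simp add: of_nat_diff)
  qed
  have factB: "sum g {1..k} \<le> lam2 * real k * (real m - real k)"
    if k: "k \<le> m" "\<forall>i. k < i \<and> i \<le> m \<longrightarrow> \<not> nb i" for k
  proof (cases "k = m")
    case True then show ?thesis using g0 by simp
  next
    case False
    have "sum g {1..k} = - sum g {k+1..m}" using sum_split[OF k(1), of g] g0 by simp
    also have "sum g {k+1..m} = (\<Sum>i=k+1..m. f i + lam1)" using k gbot by (intro sum.cong) auto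
    also have "\<dots> = (\<Sum>i=k+1..m. f i) + real (m - k) * lam1" by (simp add: sum.distrib)
    finally have "sum g {1..k} = - (\<Sum>i=k+1..m. f i) - real (m - k) * lam1" by simp
    also have "\<dots> \<le> lam2 * real k * real (m - k)" using suf k False by (auto simp: algebra_simps)
    finally show ?thesis using k by (simp add: of_nat_diff)
  qed
  obtain p where p: "p \<le> m" "\<forall>i. 1 \<le> i \<and> i \<le> p \<longrightarrow> top i" "\<forall>i. p < i \<and> i \<le> m \<longrightarrow> \<not> top i"
  proof -
    have "\<exists>p\<le>m. (\<forall>i. 1 \<le> i \<and> i \<le> p \<longrightarrow> top i) \<and> (\<forall>i. p < i \<and> i \<le> m \<longrightarrow> \<not> top i)"
    proof (rule split_pt)
      fix i j :: nat assume "1 \<le> i" "i \<le> j" "j \<le> m" "top j"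
      moreover have "f j \<le> f i" using srt \<open>1 \<le> i\<close> \<open>i \<le> j\<close> \<open>j \<le> m\<close> by blast
      ultimately show "top i" unfolding top_def by simp
    qed
    then show ?thesis using that by blast
  qed
  obtain q where q: "q \<le> m" "\<forall>i. 1 \<le> i \<and> i \<le> q \<longrightarrow> nb i" "\<forall>i. q < i \<and> i \<le> m \<longrightarrow> \<not> nb i"
  proof -
    have "\<exists>p\<le>m. (\<forall>i. 1 \<le> i \<and> i \<le> p \<longrightarrow> nb i) \<and> (\<forall>i. p < i \<and> i \<le> m \<longrightarrow> \<not> nb i)"
    proof (rule split_pt)
      fix i j :: nat assume "1 \<le> i" "i \<le> j" "j \<le> m" "nb j"
      moreover have "f j \<le> f i" using srt \<open>1 \<le> i\<close> \<open>i \<le> j\<close> \<open>j \<le> m\<close> by blast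
      ultimately show "nb i" unfolding nb_def by simp
    qed
    then show ?thesis using that by blast
  qed
  have bound: "sum g {1..k} \<le> lam2 * real k * (real m - real k)" if k: "k \<le> m" for k
  proof -
    consider "k \<le> p" | "q \<le> k" | "p < k \<and> k < q" by linarith
    then show ?thesis
    proof cases
      case 1 then show ?thesis using factA[OF k] p by auto
    next
      case 2 then show ?thesis using factB[OF k] q by auto
    next
      case 3
      have mid: "g i = th" if "p < i" "i \<le> q" for i
        using gmid p q that 3 k by auto
      have Gk: "sum g {1..k} = sum g {1..p} + (real k - real p) * th"
      proof -
        have "sum g {1..k} = sum g {1..p} + sum g {p+1..k}" using sum_split[of p k g] 3 by simp
        also have "sum g {p+1..k} = (\<Sum>i=p+1..k. th)" using mid 3 by (intro sum.cong) auto
        also have "\<dots> = (real k - real p) * th" using 3 by (simp add: of_nat_diff)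
        finally show ?thesis .
      qed
      have Gq: "sum g {1..q} = sum g {1..k} + (real q - real k) * th"
      proof -
        have "sum g {1..q} = sum g {1..k} + sum g {k+1..q}" using sum_split[of k q g] 3 by simp
        also have "sum g {k+1..q} = (\<Sum>i=k+1..q. th)" using mid 3 by (intro sum.cong) auto
        also have "\<dots> = (real q - real k) * th" using 3 by (simp add: of_nat_diff)
        finally show ?thesis .
      qed
      show ?thesis
      proof (rule concave_arith[OF _ _ l2 _ _ Gk Gq])
        show "real p < real k" "real k < real q" using 3 by auto
        show "sum g {1..p} \<le> lam2 * real p * (real m - real p)" using factA p by auto
        show "sum g {1..q} \<le> lam2 * real q * (real m - real q)" using factB q by auto
      qed
    qed
  qed
  show ?thesis using gab gs g0 bound by blast
qed


lemma suff:
  fixes f :: "nat \<Rightarrow> real"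
  assumes "m \<ge> 1" "lam1 \<ge> 0" "lam2 \<ge> 0"
    and "\<And>i j. 1 \<le> i \<Longrightarrow> i \<le> j \<Longrightarrow> j \<le> m \<Longrightarrow> f j \<le> f i"
    and "\<forall>k\<in>{1..m}. (\<Sum>j=1..k. f j) \<le> lam1 * real k + lam2 * real k * real (m - k)"
    and "\<forall>k\<in>{0..m-1}. (\<Sum>j=k+1..m. f j) \<ge> - lam1 * real (m - k) - lam2 * real k * real (m - k)"
  shows "\<exists>t0 :: nat \<Rightarrow> real. \<exists>t :: nat \<Rightarrow> nat \<Rightarrow> real.
            (\<forall>i\<in>{1..m}. t0 i \<in> {-lam1..lam1}) \<and>
            (\<forall>i\<in>{1..m}. \<forall>j\<in>{1..m}. i \<noteq> j \<longrightarrow> t i j \<in> {-lam2..lam2} \<and> t i j = - t j i) \<and>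
            (\<forall>i\<in>{1..m}. f i + t0 i + (\<Sum>j\<in>{1..m} - {i}. t i j) = 0)"
  using assms
proof (induction m arbitrary: lam1 f)
  case 0 then show ?case by simp
next
  case (Suc n)
  note l1 = Suc.prems(2) and l2 = Suc.prems(3) and srt = Suc.prems(4)
    and pre = Suc.prems(5) and suf = Suc.prems(6)
  show ?case
  proof (cases "n = 0")
    case True
    have a: "f 1 \<le> lam1"
    proof -
      have "(1::nat) \<in> {1..Suc n}" by simp
      then have "(\<Sum>j=1..1. f j) \<le> lam1 * real 1 + lam2 * real 1 * real (Suc n - 1)" using pre by blast
      then show ?thesis using True by simp
    qed
    have b: "- lam1 \<le> f 1"
    proof -
      have "(0::nat) \<in> {0..Suc n - 1}" by simp
      then have "- lam1 * real (Suc n - 0) - lam2 * real 0 * real (Suc n - 0) \<le> (\<Sum>j=0+1..Suc n. f j)" using suf by blast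
      then show ?thesis using True by simp
    qed
    show ?thesis
      by (rule exI[of _ "\<lambda>i. - f i"], rule exI[of _ "\<lambda>i j. 0"]) (use a b True l2 in auto)
  next
    case False
    obtain g where gab: "\<forall>i\<in>{1..Suc n}. \<bar>g i - f i\<bar> \<le> lam1"
      and gs: "\<forall>i j. 1 \<le> i \<longrightarrow> i \<le> j \<longrightarrow> j \<le> Suc n \<longrightarrow> g j \<le> g i"
      and g0: "sum g {1..Suc n} = 0"
      and gb: "\<forall>k\<le>Suc n. sum g {1..k} \<le> lam2 * real k * (real (Suc n) - real k)"
      using lemB[OF l1 l2 Suc.prems(1) srt pre suf] by blast
    have n1: "n \<ge> 1" using False by simp
    have gs': "\<And>i j. 1 \<le> i \<Longrightarrow> i \<le> j \<Longrightarrow> j \<le> n \<Longrightarrow> g j \<le> g i" using gs by auto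
    have pre': "\<forall>k\<in>{1..n}. (\<Sum>j=1..k. g j) \<le> lam2 * real k + lam2 * real k * real (n - k)"
    proof
      fix k assume k: "k \<in> {1..n}"
      then have "sum g {1..k} \<le> lam2 * real k * (real (Suc n) - real k)" using gb by auto
      also have "\<dots> = lam2 * real k + lam2 * real k * real (n - k)" using k by (simp add: of_nat_diff algebra_simps)
      finally show "(\<Sum>j=1..k. g j) \<le> lam2 * real k + lam2 * real k * real (n - k)" .
    qed
    have suf': "\<forall>k\<in>{0..n-1}. (\<Sum>j=k+1..n. g j) \<ge> - lam2 * real (n - k) - lam2 * real k * real (n - k)"
    proof
      fix k assume k: "k \<in> {0..n-1}"
      then have kn: "k < n" using n1 by auto
      have s1: "sum g {1..Suc n} = sum g {1..n} + g (Suc n)" by simp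
      have s2: "sum g {1..n} = sum g {1..k} + sum g {k+1..n}" using sum_split[of k n g] kn by simp
      have s3: "sum g {1..Suc n} = sum g {1..k} + sum g {k+1..Suc n}" using sum_split[of k "Suc n" g] kn by simp
      have "real (card {k+1..Suc n}) * g (Suc n) \<le> sum g {k+1..Suc n}"
        using gs by (intro sum_bounded_below) auto
      then have c1: "real (Suc n - k) * g (Suc n) \<le> - sum g {1..k}" using s3 g0 by simp
      have c2: "sum g {1..k} \<le> lam2 * real k * real (Suc n - k)" using gb kn by (simp add: of_nat_diff)
      have "sum g {1..k} + g (Suc n) \<le> lam2 * (real k + 1) * (real (Suc n - k) - 1)"
        by (rule landau_arith[OF _ c1 c2 l2]) (use kn in auto)
      also have "\<dots> = lam2 * real (n - k) + lam2 * real k * real (n - k)"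
        using kn by (simp add: of_nat_diff algebra_simps)
      finally show "(\<Sum>j=k+1..n. g j) \<ge> - lam2 * real (n - k) - lam2 * real k * real (n - k)"
        using s1 s2 g0 by simp
    qed
    obtain t0' t' where t0b: "\<forall>i\<in>{1..n}. t0' i \<in> {-lam2..lam2}"
      and tb: "\<forall>i\<in>{1..n}. \<forall>j\<in>{1..n}. i \<noteq> j \<longrightarrow> t' i j \<in> {-lam2..lam2} \<and> t' i j = - t' j i"
      and teq: "\<forall>i\<in>{1..n}. g i + t0' i + (\<Sum>j\<in>{1..n} - {i}. t' i j) = 0"
      using Suc.IH[OF n1 l2 l2 gs' pre' suf'] by blast
    define t0 where "t0 i = g i - f i" for i
    define t where "t i j = (if i \<le> n \<and> j \<le> n then t' i j else if j = Suc n then t0' i else - t0' j)" for i j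
    have P1: "\<forall>i\<in>{1..Suc n}. t0 i \<in> {-lam1..lam1}"
      using gab unfolding t0_def by (auto simp: abs_le_iff)
    have P2: "\<forall>i\<in>{1..Suc n}. \<forall>j\<in>{1..Suc n}. i \<noteq> j \<longrightarrow> t i j \<in> {-lam2..lam2} \<and> t i j = - t j i"
    proof (intro ballI impI)
      fix i j assume i: "i \<in> {1..Suc n}" and j: "j \<in> {1..Suc n}" and ij: "i \<noteq> j"
      consider "i \<le> n \<and> j \<le> n" | "i \<le> n \<and> j = Suc n" | "i = Suc n \<and> j \<le> n"
        using i j ij by fastforce
      then show "t i j \<in> {-lam2..lam2} \<and> t i j = - t j i"
      proof cases
        case 1
        then have "i \<in> {1..n}" "j \<in> {1..n}" using i j by auto
        then have "t' i j \<in> {-lam2..lam2} \<and> t' i j = - t' j i" using tb ij by blast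
        then show ?thesis using 1 unfolding t_def by simp
      next
        case 2
        then have "t0' i \<in> {-lam2..lam2}" using t0b i by auto
        then show ?thesis using 2 unfolding t_def by simp
      next
        case 3
        then have "t0' j \<in> {-lam2..lam2}" using t0b j by auto
        then show ?thesis using 3 unfolding t_def by auto
      qed
    qed
    have P3: "\<forall>i\<in>{1..Suc n}. f i + t0 i + (\<Sum>j\<in>{1..Suc n} - {i}. t i j) = 0"
    proof
      fix i assume i: "i \<in> {1..Suc n}"
      show "f i + t0 i + (\<Sum>j\<in>{1..Suc n} - {i}. t i j) = 0"
      proof (cases "i = Suc n")
        case False
        then have i': "i \<in> {1..n}" using i by auto
        have "{1..Suc n} - {i} = insert (Suc n) ({1..n} - {i})" using i' by auto
        then have "(\<Sum>j\<in>{1..Suc n} - {i}. t i j) = t i (Suc n) + (\<Sum>j\<in>{1..n} - {i}. t i j)" by simp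
        also have "(\<Sum>j\<in>{1..n} - {i}. t i j) = (\<Sum>j\<in>{1..n} - {i}. t' i j)"
          using i' unfolding t_def by (intro sum.cong) auto
        also have "t i (Suc n) = t0' i" using i' unfolding t_def by simp
        moreover have "g i + t0' i + (\<Sum>j\<in>{1..n} - {i}. t' i j) = 0" using teq i' by blast
        ultimately show ?thesis unfolding t0_def by (simp add: algebra_simps)
      next
        case True
        have "{1..Suc n} - {i} = {1..n}" using True by auto
        then have "(\<Sum>j\<in>{1..Suc n} - {i}. t i j) = (\<Sum>j\<in>{1..n}. - t0' j)"
          using True unfolding t_def by (intro sum.cong) auto
        also have "\<dots> = (\<Sum>j\<in>{1..n}. g j + (\<Sum>l\<in>{1..n} - {j}. t' j l))"
        proof (intro sum.cong refl)
          fix j assume "j \<in> {1..n}"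
          then have "g j + t0' j + (\<Sum>l\<in>{1..n} - {j}. t' j l) = 0" using teq by blast
          then show "- t0' j = g j + (\<Sum>l\<in>{1..n} - {j}. t' j l)" by linarith
        qed
        also have "\<dots> = sum g {1..n} + (\<Sum>j\<in>{1..n}. \<Sum>l\<in>{1..n} - {j}. t' j l)"
          by (simp add: sum.distrib)
        also have "(\<Sum>j\<in>{1..n}. \<Sum>l\<in>{1..n} - {j}. t' j l) = 0"
        proof (rule antisym_sum0)
          show "\<forall>i\<in>{1..n}. \<forall>j\<in>{1..n}. i \<noteq> j \<longrightarrow> t' i j = - t' j i" using tb by blast
        qed simp
        also have "sum g {1..n} = - g (Suc n)" using g0 by simp
        finally show ?thesis using True unfolding t0_def by simp
      qed
    qed
    show ?thesis using P1 P2 P3 by blast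
  qed
qed

theorem theorem1:
  fixes m :: nat and lam1 lam2 :: real and f :: "nat \<Rightarrow> real"
  assumes "m \<ge> 1" and "lam1 \<ge> 0" and "lam2 \<ge> 0"
    and "\<And>i j. 1 \<le> i \<Longrightarrow> i \<le> j \<Longrightarrow> j \<le> m \<Longrightarrow> f j \<le> f i"
  shows "(\<exists>t0 :: nat \<Rightarrow> real. \<exists>t :: nat \<Rightarrow> nat \<Rightarrow> real.
            (\<forall>i\<in>{1..m}. t0 i \<in> {-lam1..lam1}) \<and>
            (\<forall>i\<in>{1..m}. \<forall>j\<in>{1..m}. i \<noteq> j \<longrightarrow> t i j \<in> {-lam2..lam2} \<and> t i j = - t j i) \<and>
            (\<forall>i\<in>{1..m}. f i + t0 i + (\<Sum>j\<in>{1..m} - {i}. t i j) = 0))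
     \<longleftrightarrow>
         ((\<forall>k\<in>{1..m}. (\<Sum>j=1..k. f j) \<le> lam1 * real k + lam2 * real k * real (m - k)) \<and>
          (\<forall>k\<in>{0..m-1}. (\<Sum>j=k+1..m. f j) \<ge> - lam1 * real (m - k) - lam2 * real k * real (m - k)))"
proof
  assume "\<exists>t0 :: nat \<Rightarrow> real. \<exists>t :: nat \<Rightarrow> nat \<Rightarrow> real.
            (\<forall>i\<in>{1..m}. t0 i \<in> {-lam1..lam1}) \<and>
            (\<forall>i\<in>{1..m}. \<forall>j\<in>{1..m}. i \<noteq> j \<longrightarrow> t i j \<in> {-lam2..lam2} \<and> t i j = - t j i) \<and>
            (\<forall>i\<in>{1..m}. f i + t0 i + (\<Sum>j\<in>{1..m} - {i}. t i j) = 0)"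
  then obtain t0 t where b0: "\<forall>i\<in>{1..m}. t0 i \<in> {-lam1..lam1}"
    and bt: "\<forall>i\<in>{1..m}. \<forall>j\<in>{1..m}. i \<noteq> j \<longrightarrow> t i j \<in> {-lam2..lam2} \<and> t i j = - t j i"
    and eq: "\<forall>i\<in>{1..m}. f i + t0 i + (\<Sum>j\<in>{1..m} - {i}. t i j) = 0" by blast
  show "(\<forall>k\<in>{1..m}. (\<Sum>j=1..k. f j) \<le> lam1 * real k + lam2 * real k * real (m - k)) \<and>
          (\<forall>k\<in>{0..m-1}. (\<Sum>j=k+1..m. f j) \<ge> - lam1 * real (m - k) - lam2 * real k * real (m - k))"
  proof (intro conjI ballI)
    fix k assume k: "k \<in> {1..m}"
    have "\<bar>\<Sum>i\<in>{1..k}. f i\<bar> \<le> real (card {1..k}) * lam1 + real (card {1..k}) * real (card ({1..m} - {1..k})) * lam2"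
      using k by (intro necessity[OF b0 bt eq]) auto
    moreover have "{1..m} - {1..k} = {k+1..m}" by auto
    ultimately show "(\<Sum>j=1..k. f j) \<le> lam1 * real k + lam2 * real k * real (m - k)"
      by (simp add: algebra_simps)
  next
    fix k assume k: "k \<in> {0..m-1}"
    have "\<bar>\<Sum>i\<in>{k+1..m}. f i\<bar> \<le> real (card {k+1..m}) * lam1 + real (card {k+1..m}) * real (card ({1..m} - {k+1..m})) * lam2"
      using k by (intro necessity[OF b0 bt eq]) auto
    moreover have "{1..m} - {k+1..m} = {1..k}" using k assms(1) by auto
    ultimately show "(\<Sum>j=k+1..m. f j) \<ge> - lam1 * real (m - k) - lam2 * real k * real (m - k)"
      by (simp add: algebra_simps abs_le_iff)
  qed
next
  assume "(\<forall>k\<in>{1..m}. (\<Sum>j=1..k. f j) \<le> lam1 * real k + lam2 * real k * real (m - k)) \<and>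
          (\<forall>k\<in>{0..m-1}. (\<Sum>j=k+1..m. f j) \<ge> - lam1 * real (m - k) - lam2 * real k * real (m - k))"
  then have A: "\<forall>k\<in>{1..m}. (\<Sum>j=1..k. f j) \<le> lam1 * real k + lam2 * real k * real (m - k)"
    and B: "\<forall>k\<in>{0..m-1}. (\<Sum>j=k+1..m. f j) \<ge> - lam1 * real (m - k) - lam2 * real k * real (m - k)"
    by blast+
  show "\<exists>t0 :: nat \<Rightarrow> real. \<exists>t :: nat \<Rightarrow> nat \<Rightarrow> real.
            (\<forall>i\<in>{1..m}. t0 i \<in> {-lam1..lam1}) \<and>
            (\<forall>i\<in>{1..m}. \<forall>j\<in>{1..m}. i \<noteq> j \<longrightarrow> t i j \<in> {-lam2..lam2} \<and> t i j = - t j i) \<and>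
            (\<forall>i\<in>{1..m}. f i + t0 i + (\<Sum>j\<in>{1..m} - {i}. t i j) = 0)"
    by (rule suff[OF assms(1,2,3) _ A B]) (fact assms(4))
qed

end
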